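(* Let $n\ge 1$, $\lambda>0$, and let $\sigma_\lambda:\mathbb{R}^n\to\mathbb{R}^n$ be the softmax map $\sigma_\lambda(\mathbf{x})_i=\exp(\lambda x_i)/\sum_{j=1}^n\exp(\lambda x_j)$. Then for every $p\in[1,\infty]$: (a) for every $\mathbf{x}\in\mathbb{R}^n$, $\|J_{\sigma_1}(\mathbf{x})\|_p\le \tfrac12$, where $J_{\sigma_1}(\mathbf{x})$ is the Jacobian matrix of $\sigma_1$ at $\mathbf{x}$; (b) for all $\mathbf{x},\mathbf{y}\in\mathbb{R}^n$, $\|\sigma_\lambda(\mathbf{x})-\sigma_\lambda(\mathbf{y})\|_p\le \tfrac{\lambda}{2}\|\mathbf{x}-\mathbf{y}\|_p$.
   Context: For $p\in[1,\infty)$, $\|\mathbf{x}\|_p=(\sum_i|x_i|^p)^{1/p}$ and $\|\mathbf{x}\|_\infty=\max_i|x_i|$. For a matrix $A\in\mathbb{R}^{n\times n}$, $\|A\|_p=\sup_{\mathbf{v}\ne 0}\|A\mathbf{v}\|_p/\|\mathbf{v}\|_p$ denotes the operator norm induced by the vector $\ell_p$ norm. *)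

theory Defs
  imports "HOL-Analysis.Analysis"
begin

text \<open>Vectors in R^n are modelled as real^'n with 'n a finite index type.
  The exponent p ranges over [1,\<infinity>], modelled as an extended real p \<ge> 1.\<close>

definition lp_norm :: "ereal \<Rightarrow> real^'n \<Rightarrow> real" where
  "lp_norm p x =
     (if p = \<infinity> then Max (range (\<lambda>i. \<bar>x $ i\<bar>))
      else (\<Sum>i\<in>UNIV. \<bar>x $ i\<bar> powr real_of_ereal p) powr (1 / real_of_ereal p))"

definition lp_opnorm :: "ereal \<Rightarrow> real^'n^'n \<Rightarrow> real" where
  "lp_opnorm p A = (SUP v\<in>{v. v \<noteq> 0}. lp_norm p (A *v v) / lp_norm p v)"

definition softmax :: "real \<Rightarrow> real^'n \<Rightarrow> real^'n" where
  "softmax lam x = (\<chi> i. exp (lam * x $ i) / (\<Sum>j\<in>UNIV. exp (lam * x $ j)))"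

end

theory Submission imports Defs begin

lemma powr_convex0:
  fixes r :: real assumes r: "r \<ge> 1"
  shows "convex_on {0..} (\<lambda>x::real. x powr r)"
proof (rule convex_onI)
  show "convex {0::real..}" by (simp add: convex_real_interval)
next
  fix t x y :: real assume t: "0 < t" "t < 1" and xy: "x \<in> {0..}" "y \<in> {0..}"
  show "((1 - t) *\<^sub>R x + t *\<^sub>R y) powr r \<le> (1 - t) * x powr r + t * y powr r"
  proof (cases "x = 0 \<or> y = 0")
    case False
    then have "x \<in> {0<..}" "y \<in> {0<..}" using xy by auto
    then show ?thesis using convex_onD[OF powr_convex[OF r], of t x y] t by auto
  next
    case True
    have key: "(a * z) powr r \<le> a * z powr r" if "0 \<le> a" "a \<le> 1" "0 \<le> z" for a z :: real
    proof -
      have "(a * z) powr r = a powr r * z powr r" using that by (simp add: powr_mult)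
      also have "a powr r \<le> a powr 1" using that r powr_mono'[of 1 r a] by simp
      hence "a powr r * z powr r \<le> a * z powr r" using that by (cases "a = 0") (auto intro: mult_right_mono)
      finally show ?thesis .
    qed
    show ?thesis using True key[of "1-t" x] key[of t y] t xy by auto
  qed
qed

lemma jensen_weighted:
  fixes c y :: "'a \<Rightarrow> real" and r :: real
  assumes S: "finite S" and r: "r \<ge> 1" and c: "\<And>j. j \<in> S \<Longrightarrow> c j \<ge> 0"
    and y: "\<And>j. j \<in> S \<Longrightarrow> y j \<ge> 0"
  shows "(\<Sum>j\<in>S. c j * y j) powr r \<le> (\<Sum>j\<in>S. c j) powr (r - 1) * (\<Sum>j\<in>S. c j * y j powr r)"
proof (cases "(\<Sum>j\<in>S. c j) = 0")
  case True
  then have "\<forall>j\<in>S. c j = 0" using sum_nonneg_eq_0_iff[OF S] c by blast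
  then show ?thesis by simp
next
  case False
  define R where "R = (\<Sum>j\<in>S. c j)"
  have R: "R > 0" using False c unfolding R_def by (metis order_le_neq_trans sum_nonneg)
  have Sne: "S \<noteq> {}" using False by auto
  have "(\<Sum>j\<in>S. (c j / R) *\<^sub>R y j) powr r \<le> (\<Sum>j\<in>S. (c j / R) * y j powr r)"
    apply (rule convex_on_sum[OF S Sne powr_convex0[OF r]])
    using c y R by (auto simp: R_def sum_divide_distrib[symmetric])
  hence "((\<Sum>j\<in>S. c j * y j) / R) powr r \<le> (\<Sum>j\<in>S. c j * y j powr r) / R"
    by (simp add: sum_divide_distrib)
  hence "(\<Sum>j\<in>S. c j * y j) powr r / R powr r \<le> (\<Sum>j\<in>S. c j * y j powr r) / R"
    using R c y by (simp add: powr_divide sum_nonneg)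
  hence "(\<Sum>j\<in>S. c j * y j) powr r \<le> R powr r / R * (\<Sum>j\<in>S. c j * y j powr r)"
    using R by (simp add: field_simps)
  moreover have "R powr r / R = R powr (r - 1)" using R by (simp add: powr_diff)
  ultimately show ?thesis unfolding R_def by metis
qed

definition Lop :: "real^'n \<Rightarrow> real^'n \<Rightarrow> real^'n" where
  "Lop s v = (\<chi> i. s$i * (v$i - (\<Sum>j\<in>UNIV. s$j * v$j)))"

definition acoef :: "real^'n \<Rightarrow> 'n \<Rightarrow> 'n \<Rightarrow> real" where
  "acoef s i j = s$i * ((if i = j then 1 else 0) - s$j)"

lemma Lop_as_sum: "Lop s v $ i = (\<Sum>j\<in>UNIV. acoef s i j * v$j)"
proof -
  have "(\<Sum>j\<in>UNIV. acoef s i j * v$j) = (\<Sum>j\<in>UNIV. (if i = j then s$i * v$j else 0) - s$i * (s$j * v$j))"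
    by (rule sum.cong) (auto simp: acoef_def algebra_simps)
  also have "\<dots> = s$i * v$i - s$i * (\<Sum>j\<in>UNIV. s$j * v$j)"
    by (simp add: sum_subtractf sum_distrib_left)
  finally show ?thesis by (simp add: Lop_def algebra_simps)
qed

lemma s_le1:
  fixes s :: "real^'n"
  assumes nn: "\<And>i. s$i \<ge> 0" and sum1: "(\<Sum>i\<in>UNIV. s$i) = 1"
  shows "s$i \<le> 1"
  using member_le_sum[of i UNIV "\<lambda>i. s$i"] nn sum1 by auto

lemma abs_acoef:
  fixes s :: "real^'n"
  assumes nn: "\<And>i. s$i \<ge> 0" and sum1: "(\<Sum>i\<in>UNIV. s$i) = 1"
  shows "\<bar>acoef s i j\<bar> = s$i * s$j + (if i = j then s$i * (1 - 2 * s$i) else 0)"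
proof (cases "i = j")
  case True
  have "s$i \<le> 1" using s_le1[OF nn sum1] .
  then have "acoef s i j \<ge> 0" using True nn[of i] by (simp add: acoef_def)
  then show ?thesis using True by (simp add: acoef_def algebra_simps)
next
  case False
  then show ?thesis using nn[of i] nn[of j] by (simp add: acoef_def abs_mult)
qed

lemma row_sum:
  fixes s :: "real^'n"
  assumes nn: "\<And>i. s$i \<ge> 0" and sum1: "(\<Sum>i\<in>UNIV. s$i) = 1"
  shows "(\<Sum>j\<in>UNIV. \<bar>acoef s i j\<bar>) \<le> 1/2"
proof -
  have "(\<Sum>j\<in>UNIV. \<bar>acoef s i j\<bar>) = s$i * (\<Sum>j\<in>UNIV. s$j) + s$i * (1 - 2 * s$i)"
    by (simp add: abs_acoef[OF nn sum1] sum.distrib sum_distrib_left)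
  also have "\<dots> = 2 * s$i * (1 - s$i)" using sum1 by (simp add: algebra_simps)
  also have "\<dots> \<le> 1/2" using sum_squares_ge_zero[of "2 * s$i - 1" 0]
    by (simp add: algebra_simps power2_eq_square)
  finally show ?thesis .
qed

lemma col_sum:
  fixes s :: "real^'n"
  assumes nn: "\<And>i. s$i \<ge> 0" and sum1: "(\<Sum>i\<in>UNIV. s$i) = 1"
  shows "(\<Sum>i\<in>UNIV. \<bar>acoef s i j\<bar>) \<le> 1/2"
proof -
  have "(\<Sum>i\<in>UNIV. \<bar>acoef s i j\<bar>) = (\<Sum>i\<in>UNIV. s$i) * s$j + s$j * (1 - 2 * s$j)"
    by (simp add: abs_acoef[OF nn sum1] sum.distrib sum_distrib_right)
  also have "\<dots> = 2 * s$j * (1 - s$j)" using sum1 by (simp add: algebra_simps)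
  also have "\<dots> \<le> 1/2" using sum_squares_ge_zero[of "2 * s$j - 1" 0]
    by (simp add: algebra_simps power2_eq_square)
  finally show ?thesis .
qed

lemma Lop_abs_le:
  "\<bar>Lop s v $ i\<bar> \<le> (\<Sum>j\<in>UNIV. \<bar>acoef s i j\<bar> * \<bar>v$j\<bar>)"
  unfolding Lop_as_sum by (rule order_trans[OF sum_abs]) (simp add: abs_mult)

lemma core_inf:
  fixes s v :: "real^'n"
  assumes nn: "\<And>i. s$i \<ge> 0" and sum1: "(\<Sum>i\<in>UNIV. s$i) = 1"
  shows "lp_norm \<infinity> (Lop s v) \<le> 1/2 * lp_norm \<infinity> v"
proof -
  define M where "M = Max (range (\<lambda>i. \<bar>v$i\<bar>))"
  have vM: "\<bar>v$j\<bar> \<le> M" for j unfolding M_def by (rule Max_ge) auto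
  have "\<bar>Lop s v $ i\<bar> \<le> 1/2 * M" for i
  proof -
    have "\<bar>Lop s v $ i\<bar> \<le> (\<Sum>j\<in>UNIV. \<bar>acoef s i j\<bar> * \<bar>v$j\<bar>)" by (rule Lop_abs_le)
    also have "\<dots> \<le> (\<Sum>j\<in>UNIV. \<bar>acoef s i j\<bar> * M)" by (rule sum_mono) (simp add: vM mult_left_mono)
    also have "\<dots> = (\<Sum>j\<in>UNIV. \<bar>acoef s i j\<bar>) * M" by (simp add: sum_distrib_right)
    also have "\<dots> \<le> 1/2 * M" using row_sum[OF nn sum1, of i] vM[of i]
      by (intro mult_right_mono) auto
    finally show ?thesis .
  qed
  then have "Max (range (\<lambda>i. \<bar>Lop s v $ i\<bar>)) \<le> 1/2 * M"
    by (intro Max.boundedI) auto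
  then show ?thesis unfolding lp_norm_def M_def by simp
qed

lemma core_fin:
  fixes s v :: "real^'n" and r :: real
  assumes nn: "\<And>i. s$i \<ge> 0" and sum1: "(\<Sum>i\<in>UNIV. s$i) = 1" and r: "r \<ge> 1"
  shows "lp_norm (ereal r) (Lop s v) \<le> 1/2 * lp_norm (ereal r) v"
proof -
  define V where "V = (\<Sum>j\<in>UNIV. \<bar>v$j\<bar> powr r)"
  have V0: "V \<ge> 0" unfolding V_def by (simp add: sum_nonneg)
  have rowi: "\<bar>Lop s v $ i\<bar> powr r \<le> (1/2) powr (r - 1) * (\<Sum>j\<in>UNIV. \<bar>acoef s i j\<bar> * \<bar>v$j\<bar> powr r)" for i
  proof -
    have "\<bar>Lop s v $ i\<bar> powr r \<le> (\<Sum>j\<in>UNIV. \<bar>acoef s i j\<bar> * \<bar>v$j\<bar>) powr r"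
      using Lop_abs_le r by (intro powr_mono2) auto
    also have "\<dots> \<le> (\<Sum>j\<in>UNIV. \<bar>acoef s i j\<bar>) powr (r - 1) * (\<Sum>j\<in>UNIV. \<bar>acoef s i j\<bar> * \<bar>v$j\<bar> powr r)"
      by (rule jensen_weighted) (use r in auto)
    also have "\<dots> \<le> (1/2) powr (r - 1) * (\<Sum>j\<in>UNIV. \<bar>acoef s i j\<bar> * \<bar>v$j\<bar> powr r)"
      using row_sum[OF nn sum1, of i] r
      by (intro mult_right_mono powr_mono2) (auto simp: sum_nonneg)
    finally show ?thesis .
  qed
  have "(\<Sum>i\<in>UNIV. \<bar>Lop s v $ i\<bar> powr r) \<le> (\<Sum>i\<in>UNIV. (1/2) powr (r - 1) * (\<Sum>j\<in>UNIV. \<bar>acoef s i j\<bar> * \<bar>v$j\<bar> powr r))"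
    by (rule sum_mono) (rule rowi)
  also have "\<dots> = (1/2) powr (r - 1) * (\<Sum>j\<in>UNIV. (\<Sum>i\<in>UNIV. \<bar>acoef s i j\<bar>) * \<bar>v$j\<bar> powr r)"
  proof -
    have "(\<Sum>i\<in>UNIV. (\<Sum>j\<in>UNIV. \<bar>acoef s i j\<bar> * \<bar>v$j\<bar> powr r)) = (\<Sum>j\<in>UNIV. (\<Sum>i\<in>UNIV. \<bar>acoef s i j\<bar> * \<bar>v$j\<bar> powr r))"
      by (rule sum.swap)
    also have "\<dots> = (\<Sum>j\<in>UNIV. (\<Sum>i\<in>UNIV. \<bar>acoef s i j\<bar>) * \<bar>v$j\<bar> powr r)"
      by (simp only: sum_distrib_right)
    finally show ?thesis by (simp only: sum_distrib_left[symmetric])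
  qed
  also have "\<dots> \<le> (1/2) powr (r - 1) * (\<Sum>j\<in>UNIV. 1/2 * \<bar>v$j\<bar> powr r)"
    using col_sum[OF nn sum1] by (intro mult_left_mono sum_mono mult_right_mono) auto
  also have "\<dots> = (1/2) powr r * V"
    by (simp add: V_def sum_distrib_left powr_diff)
  finally have le: "(\<Sum>i\<in>UNIV. \<bar>Lop s v $ i\<bar> powr r) \<le> (1/2) powr r * V" .
  have "(\<Sum>i\<in>UNIV. \<bar>Lop s v $ i\<bar> powr r) powr (1/r) \<le> ((1/2) powr r * V) powr (1/r)"
    using le r by (intro powr_mono2) (auto simp: sum_nonneg)
  also have "\<dots> = 1/2 * V powr (1/r)"
    using r V0 by (simp add: powr_mult powr_powr)
  finally show ?thesis unfolding lp_norm_def V_def by simp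
qed

lemma core:
  fixes s v :: "real^'n" and p :: ereal
  assumes nn: "\<And>i. s$i \<ge> 0" and sum1: "(\<Sum>i\<in>UNIV. s$i) = 1" and p: "1 \<le> p"
  shows "lp_norm p (Lop s v) \<le> 1/2 * lp_norm p v"
proof (cases p)
  case (real r)
  then show ?thesis using core_fin[OF nn sum1, of r v] p by simp
next
  case PInf
  then show ?thesis using core_inf[OF nn sum1] by simp
next
  case MInf
  then show ?thesis using p by simp
qed

lemma hd_nth: "((\<lambda>y::real^'n. y$k) has_derivative (\<lambda>h. h$k)) F"
  by (rule bounded_linear_imp_has_derivative) (rule bounded_linear_vec_nth)

lemma softmax_comp_deriv:
  fixes x :: "real^'n"
  shows "((\<lambda>y. softmax 1 y $ k) has_derivative (\<lambda>h. Lop (softmax 1 x) h $ k)) (at x)"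
proof -
  define S where "S = (\<Sum>j\<in>UNIV. exp (x$j))"
  have S0: "S > 0" unfolding S_def by (simp add: sum_pos)
  have "((\<lambda>y. exp (y$k) / (\<Sum>j\<in>UNIV. exp (y$j))) has_derivative
     (\<lambda>h. (exp (x$k) * h$k * S - exp (x$k) * (\<Sum>j\<in>UNIV. exp (x$j) * h$j)) / (S * S))) (at x)"
    apply (rule has_derivative_eq_rhs)
     apply (rule has_derivative_divide)
      apply (rule has_derivative_exp, rule hd_nth)
     apply (rule has_derivative_sum, rule has_derivative_exp, rule hd_nth)
    using S0 apply (simp add: S_def)
    apply (rule ext) using S0 apply (simp add: S_def field_simps)
    done
  moreover have "(exp (x$k) * h$k * S - exp (x$k) * (\<Sum>j\<in>UNIV. exp (x$j) * h$j)) / (S * S)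
      = Lop (softmax 1 x) h $ k" for h
  proof -
    have "Lop (softmax 1 x) h $ k = exp (x$k) / S * (h$k - (\<Sum>j\<in>UNIV. exp (x$j) * h$j) / S)"
      by (simp add: Lop_def softmax_def S_def sum_divide_distrib)
    then show ?thesis using S0 by (simp add: field_simps)
  qed
  ultimately show ?thesis by (simp add: softmax_def)
qed

lemma softmax_deriv:
  fixes x :: "real^'n"
  shows "(softmax 1 has_derivative Lop (softmax 1 x)) (at x)"
  using has_derivative_componentwise_within[of "softmax 1" "Lop (softmax 1 x)" x UNIV]
    softmax_comp_deriv[of _ x]
  by (auto simp: Basis_vec_def inner_axis)

lemma softmax_nn: "softmax 1 x $ i \<ge> 0"
  by (simp add: softmax_def sum_nonneg)

lemma softmax_sum1: "(\<Sum>i\<in>UNIV. softmax 1 x $ i) = 1"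
proof -
  have "(\<Sum>j\<in>UNIV. exp (x$j)) > 0" by (simp add: sum_pos)
  then show ?thesis by (simp add: softmax_def sum_divide_distrib[symmetric])
qed

lemma lp_norm_nonneg: "lp_norm p v \<ge> 0"
proof (cases "p = \<infinity>")
  case True
  have "0 \<le> \<bar>v $ undefined\<bar>" by simp
  also have "\<dots> \<le> Max (range (\<lambda>i. \<bar>v$i\<bar>))" by (rule Max_ge) auto
  finally show ?thesis using True by (simp add: lp_norm_def)
qed (simp add: lp_norm_def)

lemma lp_norm_scale:
  fixes v :: "real^'n" and c :: real
  assumes c: "c \<ge> 0" and p: "1 \<le> p"
  shows "lp_norm p (c *\<^sub>R v) = c * lp_norm p v"
proof (cases p)
  case (real r)
  have r: "r \<ge> 1" using p real by simp
  have "(\<Sum>i\<in>UNIV. \<bar>(c *\<^sub>R v) $ i\<bar> powr r) = c powr r * (\<Sum>i\<in>UNIV. \<bar>v $ i\<bar> powr r)"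
    using c by (simp add: abs_mult powr_mult sum_distrib_left)
  then have "lp_norm p (c *\<^sub>R v) = (c powr r * (\<Sum>i\<in>UNIV. \<bar>v $ i\<bar> powr r)) powr (1/r)"
    using real by (simp add: lp_norm_def)
  also have "\<dots> = c * (\<Sum>i\<in>UNIV. \<bar>v $ i\<bar> powr r) powr (1/r)"
    using c r by (simp add: powr_mult powr_powr sum_nonneg)
  finally show ?thesis using real by (simp add: lp_norm_def)
next
  case PInf
  have m: "mono ((*) c)" using c by (auto intro!: monoI mult_left_mono)
  have "Max (range (\<lambda>i. \<bar>(c *\<^sub>R v) $ i\<bar>)) = Max ((*) c ` range (\<lambda>i. \<bar>v$i\<bar>))"
    using c by (simp add: abs_mult image_image)
  also have "\<dots> = c * Max (range (\<lambda>i. \<bar>v$i\<bar>))"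
    by (rule mono_Max_commute[OF m, symmetric]) auto
  finally show ?thesis using PInf by (simp add: lp_norm_def)
next
  case MInf
  then show ?thesis using p by simp
qed

lemma holder_aux:
  fixes u v :: "real^'n" and r :: real
  assumes r: "r \<ge> 1"
  shows "(\<Sum>i\<in>UNIV. \<bar>u$i\<bar> powr (r - 1) * \<bar>v$i\<bar>)
     \<le> (\<Sum>i\<in>UNIV. \<bar>u$i\<bar> powr r) powr ((r - 1) / r) * (\<Sum>i\<in>UNIV. \<bar>v$i\<bar> powr r) powr (1 / r)"
proof -
  define c where "c i = \<bar>u$i\<bar> powr r" for i
  define y where "y i = (if u$i = 0 then 0 else \<bar>v$i\<bar> / \<bar>u$i\<bar>)" for i
  define H where "H = (\<Sum>i\<in>UNIV. \<bar>u$i\<bar> powr (r - 1) * \<bar>v$i\<bar>)"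
  define U where "U = (\<Sum>i\<in>UNIV. \<bar>u$i\<bar> powr r)"
  define V where "V = (\<Sum>i\<in>UNIV. \<bar>v$i\<bar> powr r)"
  have cy: "c i * y i = \<bar>u$i\<bar> powr (r - 1) * \<bar>v$i\<bar>" for i
  proof (cases "u$i = 0")
    case False
    have "\<bar>u$i\<bar> powr r = \<bar>u$i\<bar> powr (r - 1) * \<bar>u$i\<bar>"
      using False by (simp add: powr_diff)
    then show ?thesis using False by (simp add: c_def y_def)
  qed (simp add: c_def y_def)
  have cyr: "c i * y i powr r \<le> \<bar>v$i\<bar> powr r" for i
  proof (cases "u$i = 0")
    case False
    have "c i * y i powr r = \<bar>v$i\<bar> powr r"
      using False by (simp add: c_def y_def powr_divide)
    then show ?thesis by simp
  qed (simp add: c_def y_def)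
  have H0: "H \<ge> 0" unfolding H_def by (simp add: sum_nonneg)
  have "H powr r = (\<Sum>i\<in>UNIV. c i * y i) powr r" by (simp add: H_def cy)
  also have "\<dots> \<le> (\<Sum>i\<in>UNIV. c i) powr (r - 1) * (\<Sum>i\<in>UNIV. c i * y i powr r)"
    by (rule jensen_weighted) (use r in \<open>auto simp: c_def y_def\<close>)
  also have "\<dots> \<le> U powr (r - 1) * V"
    unfolding U_def V_def c_def[symmetric] by (intro mult_left_mono sum_mono cyr) auto
  finally have "H powr r \<le> U powr (r - 1) * V" .
  then have "(H powr r) powr (1/r) \<le> (U powr (r - 1) * V) powr (1/r)"
    using r H0 by (intro powr_mono2) auto
  moreover have "(H powr r) powr (1/r) = H" using r H0 by (simp add: powr_powr)
  moreover have "(U powr (r - 1) * V) powr (1/r) = U powr ((r - 1) / r) * V powr (1/r)"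
    by (simp add: U_def V_def powr_mult powr_powr sum_nonneg)
  ultimately show ?thesis by (simp add: H_def U_def V_def)
qed

lemma dual_fin:
  fixes u :: "real^'n" and r :: real
  assumes r: "r \<ge> 1"
  shows "\<exists>w::real^'n. (\<Sum>i\<in>UNIV. w$i * u$i) = lp_norm (ereal r) u \<and>
           (\<forall>v. (\<Sum>i\<in>UNIV. w$i * v$i) \<le> lp_norm (ereal r) v)"
proof -
  define U where "U = (\<Sum>i\<in>UNIV. \<bar>u$i\<bar> powr r)"
  have U0: "U \<ge> 0" unfolding U_def by (simp add: sum_nonneg)
  show ?thesis
  proof (cases "U = 0")
    case True
    show ?thesis
      by (rule exI[of _ 0]) (use True r in \<open>simp add: lp_norm_def U_def[symmetric] lp_norm_nonneg\<close>)
  next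
    case False
    then have Upos: "U > 0" using U0 by simp
    define K where "K = U powr ((r - 1) / r)"
    have Kpos: "K > 0" unfolding K_def using Upos by simp
    define w where "w = (\<chi> i. sgn (u$i) * \<bar>u$i\<bar> powr (r - 1) / K)"
    have wu: "w$i * u$i = \<bar>u$i\<bar> powr r / K" for i
    proof (cases "u$i = 0")
      case False
      have f1: "sgn (u$i) * u$i = \<bar>u$i\<bar>" by (simp add: sgn_mult_abs abs_sgn mult.commute)
      have f2: "\<bar>u$i\<bar> powr (r - 1) * \<bar>u$i\<bar> = \<bar>u$i\<bar> powr r"
        using False by (simp add: powr_diff)
      have "w$i * u$i = (sgn (u$i) * u$i) * (\<bar>u$i\<bar> powr (r - 1)) / K"
        by (simp add: w_def)
      also have "\<dots> = \<bar>u$i\<bar> powr r / K" using f1 f2 by (simp add: mult.commute)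
      finally show ?thesis .
    qed (simp add: w_def)
    have "(\<Sum>i\<in>UNIV. w$i * u$i) = U / K" by (simp add: wu U_def sum_divide_distrib)
    also have "\<dots> = U powr 1 / U powr ((r - 1) / r)" using Upos by (simp add: K_def)
    also have "\<dots> = U powr (1 - (r - 1) / r)" by (simp add: powr_diff)
    also have "1 - (r - 1) / r = 1 / r" using r by (simp add: field_simps)
    finally have eq: "(\<Sum>i\<in>UNIV. w$i * u$i) = lp_norm (ereal r) u"
      by (simp add: lp_norm_def U_def)
    have le: "(\<Sum>i\<in>UNIV. w$i * v$i) \<le> lp_norm (ereal r) v" for v
    proof -
      have "(\<Sum>i\<in>UNIV. w$i * v$i) \<le> (\<Sum>i\<in>UNIV. \<bar>u$i\<bar> powr (r - 1) * \<bar>v$i\<bar> / K)"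
      proof (rule sum_mono)
        fix i
        have "w$i * v$i \<le> \<bar>w$i * v$i\<bar>" by simp
        also have "\<dots> = \<bar>u$i\<bar> powr (r - 1) * \<bar>v$i\<bar> / K"
          using Kpos by (simp add: w_def abs_mult abs_sgn_eq)
        finally show "w$i * v$i \<le> \<bar>u$i\<bar> powr (r - 1) * \<bar>v$i\<bar> / K" .
      qed
      also have "\<dots> = (\<Sum>i\<in>UNIV. \<bar>u$i\<bar> powr (r - 1) * \<bar>v$i\<bar>) / K"
        by (simp add: sum_divide_distrib)
      also have "\<dots> \<le> (K * (\<Sum>i\<in>UNIV. \<bar>v$i\<bar> powr r) powr (1 / r)) / K"
        using holder_aux[OF r, of u v] Kpos by (intro divide_right_mono) (auto simp: K_def U_def)
      also have "\<dots> = lp_norm (ereal r) v" using Kpos by (simp add: lp_norm_def)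
      finally show ?thesis .
    qed
    show ?thesis using eq le by blast
  qed
qed

lemma dual_inf:
  fixes u :: "real^'n"
  shows "\<exists>w::real^'n. (\<Sum>i\<in>UNIV. w$i * u$i) = lp_norm \<infinity> u \<and>
           (\<forall>v. (\<Sum>i\<in>UNIV. w$i * v$i) \<le> lp_norm \<infinity> v)"
proof -
  have "Max (range (\<lambda>i. \<bar>u$i\<bar>)) \<in> range (\<lambda>i. \<bar>u$i\<bar>)" by (rule Max_in) auto
  then obtain k where k': "Max (range (\<lambda>i. \<bar>u$i\<bar>)) = \<bar>u$k\<bar>" by (rule rangeE)
  then have k: "\<bar>u$k\<bar> = Max (range (\<lambda>i. \<bar>u$i\<bar>))" by simp
  define w where "w = (\<chi> i. if i = k then sgn (u$k) else (0::real))"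
  have sw: "(\<Sum>i\<in>UNIV. w$i * v$i) = sgn (u$k) * v$k" for v
  proof -
    have "(\<Sum>i\<in>UNIV. w$i * v$i) = (\<Sum>i\<in>UNIV. if i = k then sgn (u$k) * v$k else 0)"
      by (rule sum.cong) (auto simp: w_def)
    then show ?thesis by simp
  qed
  have "(\<Sum>i\<in>UNIV. w$i * u$i) = sgn (u$k) * u$k" by (rule sw)
  also have "\<dots> = \<bar>u$k\<bar>" by (simp add: sgn_real_def)
  also have "\<dots> = lp_norm \<infinity> u" using k by (simp add: lp_norm_def)
  finally have "(\<Sum>i\<in>UNIV. w$i * u$i) = lp_norm \<infinity> u" .
  moreover have "(\<Sum>i\<in>UNIV. w$i * v$i) \<le> lp_norm \<infinity> v" for v
  proof -
    have "sgn (u$k) * v$k \<le> \<bar>v$k\<bar>" by (simp add: sgn_real_def) linarith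
    also have "\<dots> \<le> Max (range (\<lambda>i. \<bar>v$i\<bar>))" by (rule Max_ge) auto
    finally show ?thesis by (simp add: sw lp_norm_def)
  qed
  ultimately show ?thesis by blast
qed

lemma dual:
  fixes u :: "real^'n" and p :: ereal
  assumes p: "1 \<le> p"
  shows "\<exists>w::real^'n. (\<Sum>i\<in>UNIV. w$i * u$i) = lp_norm p u \<and>
           (\<forall>v. (\<Sum>i\<in>UNIV. w$i * v$i) \<le> lp_norm p v)"
proof (cases p)
  case (real r)
  then show ?thesis using dual_fin[of r u] p by simp
next
  case PInf
  then show ?thesis using dual_inf[of u] by simp
next
  case MInf
  then show ?thesis using p by simp
qed

lemma lip1:
  fixes x y :: "real^'n" and p :: ereal
  assumes p: "1 \<le> p"
  shows "lp_norm p (softmax 1 y - softmax 1 x) \<le> 1/2 * lp_norm p (y - x)"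
proof -
  define d where "d = y - x"
  obtain w :: "real^'n" where w1: "(\<Sum>i\<in>UNIV. w$i * (softmax 1 y - softmax 1 x)$i) = lp_norm p (softmax 1 y - softmax 1 x)"
    and w2: "\<And>v. (\<Sum>i\<in>UNIV. w$i * v$i) \<le> lp_norm p v"
    using dual[OF p] by blast
  define g where "g t = (\<Sum>i\<in>UNIV. w$i * softmax 1 (x + t *\<^sub>R d) $ i)" for t
  define g' where "g' t = (\<lambda>h. \<Sum>i\<in>UNIV. w$i * Lop (softmax 1 (x + t *\<^sub>R d)) (h *\<^sub>R d) $ i)" for t
  have gd: "(g has_derivative g' t) (at t within {0..1})" for t
  proof -
    have lin: "((\<lambda>t. x + t *\<^sub>R d) has_derivative (\<lambda>h. h *\<^sub>R d)) (at t within {0..1})"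
      by (auto intro!: derivative_eq_intros)
    have comp: "((\<lambda>t. softmax 1 (x + t *\<^sub>R d) $ i) has_derivative (\<lambda>h. Lop (softmax 1 (x + t *\<^sub>R d)) (h *\<^sub>R d) $ i)) (at t within {0..1})" for i
      using has_derivative_compose[OF lin softmax_comp_deriv[of i "x + t *\<^sub>R d"]] by simp
    show ?thesis unfolding g_def g'_def
      by (intro has_derivative_sum has_derivative_mult_right comp)
  qed
  obtain t where "t \<in> {0..1}" and mv: "g 1 - g 0 = g' t (1 - 0)"
    using mvt_very_simple[of 0 1 g g'] gd by auto
  have e1: "g 1 - g 0 = lp_norm p (softmax 1 y - softmax 1 x)"
    unfolding g_def d_def w1[symmetric] by (simp add: sum_subtractf algebra_simps)
  have "lp_norm p (softmax 1 y - softmax 1 x) = g' t 1" using mv e1 by simp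
  also have "\<dots> \<le> lp_norm p (Lop (softmax 1 (x + t *\<^sub>R d)) d)"
    unfolding g'_def using w2 by simp
  also have "\<dots> \<le> 1/2 * lp_norm p d"
    by (rule core[OF softmax_nn softmax_sum1 p])
  finally show ?thesis by (simp add: d_def)
qed

lemma softmax_scale: "softmax lam x = softmax 1 (lam *\<^sub>R x)"
  by (simp add: softmax_def)

lemma jac_eq: "jacobian (softmax 1) (at x) *v v = Lop (softmax 1 x) (v :: real^'n)"
proof -
  have d: "(softmax 1 has_derivative Lop (softmax 1 x)) (at x)" by (rule softmax_deriv)
  have "frechet_derivative (softmax 1) (at x) = Lop (softmax 1 x)"
    using frechet_derivative_at[OF d] by simp
  moreover have "linear (Lop (softmax 1 x))" using has_derivative_linear[OF d] .
  ultimately show ?thesis unfolding jacobian_def by (simp add: matrix_works)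
qed

theorem theorem1:
  fixes lam :: real and p :: ereal
  assumes "lam > 0" and "1 \<le> p"
  shows "(\<forall>x :: real^'n. lp_opnorm p (jacobian (softmax 1) (at x)) \<le> 1 / 2)
       \<and> (\<forall>x y :: real^'n. lp_norm p (softmax lam x - softmax lam y) \<le> lam / 2 * lp_norm p (x - y))"
proof (intro conjI allI)
  fix x :: "real^'n"
  have ne: "{v::real^'n. v \<noteq> 0} \<noteq> {}"
  proof -
    have "(axis undefined 1 :: real^'n) \<noteq> 0" by (simp add: axis_eq_0_iff)
    then show ?thesis by blast
  qed
  show "lp_opnorm p (jacobian (softmax 1) (at x)) \<le> 1 / 2"
    unfolding lp_opnorm_def
  proof (rule cSUP_least[OF ne])
    fix v :: "real^'n"
    have a: "lp_norm p (Lop (softmax 1 x) v) \<le> 1/2 * lp_norm p v"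
      by (rule core[OF softmax_nn softmax_sum1 assms(2)])
    have b: "lp_norm p v \<ge> 0" by (rule lp_norm_nonneg)
    show "lp_norm p (jacobian (softmax 1) (at x) *v v) / lp_norm p v \<le> 1 / 2"
    proof (cases "lp_norm p v = 0")
      case False
      then have "lp_norm p v > 0" using b by simp
      then show ?thesis using a by (simp add: jac_eq divide_le_eq)
    qed simp
  qed
next
  fix x y :: "real^'n"
  have "lp_norm p (softmax lam x - softmax lam y) \<le> 1/2 * lp_norm p (lam *\<^sub>R x - lam *\<^sub>R y)"
    unfolding softmax_scale[of lam] by (rule lip1[OF assms(2)])
  also have "lam *\<^sub>R x - lam *\<^sub>R y = lam *\<^sub>R (x - y)" by (simp add: scaleR_diff_right)
  also have "lp_norm p (lam *\<^sub>R (x - y)) = lam * lp_norm p (x - y)"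
    using assms by (intro lp_norm_scale) auto
  finally show "lp_norm p (softmax lam x - softmax lam y) \<le> lam / 2 * lp_norm p (x - y)" by simp
qed

end
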